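(* Fix $0<s\le1$, let $\rho:=\rho(s)=e^s/s$, and let $\phi:(0,1]\to[1,\infty)$ be integrable. If there exists a tight $(\rho,\chi)$-bidding profile induced by $\phi$, then for all $x\in(0,1]$, \[ \phi(x)\ge\max\left(1,\ s\chi\, e^{s(x-1)}\right). \]
   Context: Given $1<\chi\le\rho$, a $(\rho,\chi)$-bidding profile is a non-decreasing, left-continuous $G:\mathbb{R}\to(0,\infty)$ with (offset) $G(x)<1$ for $x<0$ and $G(x)\ge1$ for $x>0$; (robustness) $\int_{-\infty}^{x+1}G(t)\,\mathrm{d} t\le\rho G(x)$ for all $x\in\mathbb{R}$; (consistency) $\int_{-\infty}^1G(t)\,\mathrm{d} t\le\chi$. It is tight if additionally $\int_{-\infty}^{x+1}G(t)\,\mathrm{d} t=\rho G(x)$ for all $x\le0$ and $\int_{-\infty}^1G(t)\,\mathrm{d} t=\chi$. It is induced by $\phi$ if $G|_{(0,1]}\equiv\phi$. *)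

theory Defs
  imports "HOL-Analysis.Analysis"
begin

text \<open>Integrals over half-lines are Henstock-Kurzweil
integrals over {..a}; since G is positive and monotone this agrees with the Lebesgue
integral, and the inequalities implicitly require finiteness (integrability).\<close>

definition bidding_profile :: "real \<Rightarrow> real \<Rightarrow> (real \<Rightarrow> real) \<Rightarrow> bool" where
  "bidding_profile rho chi G \<longleftrightarrow>
     1 < chi \<and> chi \<le> rho \<and>
     mono G \<and> (\<forall>x. 0 < G x) \<and> (\<forall>x. continuous (at_left x) G) \<and>
     (\<forall>x<0. G x < 1) \<and> (\<forall>x>0. 1 \<le> G x) \<and>
     (\<forall>x. G integrable_on {..x+1} \<and> integral {..x+1} G \<le> rho * G x) \<and>
     G integrable_on {..1} \<and> integral {..1} G \<le> chi"

definition tight_bidding_profile :: "real \<Rightarrow> real \<Rightarrow> (real \<Rightarrow> real) \<Rightarrow> bool" where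
  "tight_bidding_profile rho chi G \<longleftrightarrow>
     bidding_profile rho chi G \<and>
     (\<forall>x\<le>0. integral {..x+1} G = rho * G x) \<and>
     integral {..1} G = chi"

definition induced_by :: "(real \<Rightarrow> real) \<Rightarrow> (real \<Rightarrow> real) \<Rightarrow> bool" where
  "induced_by G \<phi> \<longleftrightarrow> (\<forall>x\<in>{0<..1}. G x = \<phi> x)"

end

theory Submission
  imports Defs
begin

lemma split_int:
  fixes G :: "real \<Rightarrow> real"
  assumes mono: "mono G" and int: "\<And>x. G integrable_on {..x}" and ab: "a \<le> b"
  shows "integral {..b} G = integral {..a} G + integral {a..b} G"
proof -
  have i2: "G integrable_on {a..b}"
    by (rule integrable_on_mono_on) (use mono in \<open>auto simp: mono_def monotone_on_def\<close>)
  have "{..b} = {..a} \<union> {a..b}" using ab by auto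
  moreover have "{..a} \<inter> {a..b} = {a}" using ab by auto
  ultimately show ?thesis using int[of a] i2 by simp
qed

lemma int_lower:
  fixes G :: "real \<Rightarrow> real"
  assumes mono: "mono G" and ab: "a \<le> b"
  shows "(b - a) * G a \<le> integral {a..b} G"
proof -
  have i2: "G integrable_on {a..b}"
    by (rule integrable_on_mono_on) (use mono in \<open>auto simp: mono_def monotone_on_def\<close>)
  have "integral {a..b} (\<lambda>_. G a) \<le> integral {a..b} G"
    by (rule integral_le) (use i2 mono in \<open>auto simp: mono_def\<close>)
  thus ?thesis using ab by simp
qed

lemma gronwall:
  fixes F G :: "real \<Rightarrow> real" and c :: real
  assumes step: "\<And>t h. 0 \<le> h \<Longrightarrow> F t + h * G t \<le> F (t + h)"
    and cG: "\<And>t. c * F t \<le> G t" and c0: "0 \<le> c" and Fpos: "\<And>t. 0 \<le> F t"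
    and d0: "0 \<le> d"
  shows "exp (c * d) * F a \<le> F (a + d)"
proof -
  have st: "(1 + c * h) * F t \<le> F (t + h)" if "0 \<le> h" for t h
  proof -
    have "h * (c * F t) \<le> h * G t" using cG that by (simp add: mult_left_mono)
    thus ?thesis using step[OF that, of t] by (simp add: algebra_simps)
  qed
  have ind: "(1 + c * h) ^ k * F a \<le> F (a + real k * h)" if "0 \<le> h" for h k
  proof (induction k)
    case 0 then show ?case by simp
  next
    case (Suc k)
    have "(1 + c * h) ^ Suc k * F a = (1 + c * h) * ((1 + c * h) ^ k * F a)" by simp
    also have "\<dots> \<le> (1 + c * h) * F (a + real k * h)"
      using Suc that c0 by (intro mult_left_mono) auto
    also have "\<dots> \<le> F (a + real k * h + h)" using st[OF that] by simp
    finally show ?case by (simp add: algebra_simps)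
  qed
  have ev: "\<forall>\<^sub>F n in sequentially. (1 + (c * d) / real n) ^ n * F a \<le> F (a + d)"
    using eventually_gt_at_top[of 0]
  proof eventually_elim
    case (elim n)
    have "(1 + c * (d / real n)) ^ n * F a \<le> F (a + real n * (d / real n))"
      by (rule ind) (use d0 in auto)
    thus ?case using elim by simp
  qed
  have lim: "(\<lambda>n. (1 + (c * d) / real n) ^ n * F a) \<longlonglongrightarrow> exp (c * d) * F a"
    by (intro tendsto_mult tendsto_exp_limit_sequentially tendsto_const)
  show ?thesis using lim ev by (rule tendsto_upperbound) simp
qed

lemma strict_exp:
  fixes y :: real assumes "y < 0" shows "1 + y < exp y"
proof (cases "1 + y / 2 < 0")
  case True thus ?thesis using exp_gt_zero[of y] by linarith
next
  case False
  have "(1 + y/2)^2 \<le> exp (y/2) ^ 2"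
    using False exp_ge_add_one_self[of "y/2"] by (intro power_mono) auto
  also have "exp (y/2) ^ 2 = exp y" by (simp add: power2_eq_square flip: exp_add)
  finally have "(1 + y/2)^2 \<le> exp y" .
  moreover have "(1 + y/2)^2 = 1 + y + y^2/4" by (simp add: power2_eq_square algebra_simps)
  moreover have "y^2 > 0" using assms by simp
  ultimately show ?thesis by linarith
qed

theorem lemma9:
  fixes s chi :: real and \<phi> :: "real \<Rightarrow> real"
  assumes "0 < s" and "s \<le> 1"
    and "\<forall>x\<in>{0<..1}. 1 \<le> \<phi> x"
    and "\<phi> integrable_on {0<..1}"
    and "\<exists>G. tight_bidding_profile (exp s / s) chi G \<and> induced_by G \<phi>"
  shows "\<forall>x\<in>{0<..1}. \<phi> x \<ge> max 1 (s * chi * exp (s * (x - 1)))"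
proof -
  define rho where "rho = exp s / s"
  have rho0: "0 < rho" using assms(1) by (simp add: rho_def)
  obtain G where tb: "tight_bidding_profile rho chi G" and ind: "induced_by G \<phi>"
    using assms(5) rho_def by blast
  have mono: "mono G" and Gpos: "\<And>x. 0 < G x"
    and intx: "\<And>x. G integrable_on {..x+1}" and rob: "\<And>x. integral {..x+1} G \<le> rho * G x"
    and t0: "integral {..1} G = rho * G 0" and t1: "integral {..1} G = chi"
    using tb unfolding tight_bidding_profile_def bidding_profile_def by auto
  have int: "\<And>x. G integrable_on {..x}"
    using intx by (metis diff_add_cancel)
  define F where "F x = integral {..x} G" for x
  have step: "F t + h * G t \<le> F (t + h)" if "0 \<le> h" for t h
    using split_int[OF mono int, of t "t+h"] int_lower[OF mono, of t "t+h"] that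
    by (simp add: F_def)
  have F0: "0 \<le> F t" for t
    unfolding F_def by (rule integral_nonneg[OF int]) (simp add: Gpos less_imp_le)
  have Fpos: "0 < F t" for t
    using step[of 1 "t - 1"] F0[of "t - 1"] Gpos[of "t - 1"] by simp
  have robF: "F (t + 1) \<le> rho * G t" for t using rob[of t] by (simp add: F_def)
  define w where "w t = G t / F t" for t
  have wpos: "0 < w t" for t using Gpos Fpos by (simp add: w_def)
  define m where "m = Inf (range w)"
  have bdd: "bdd_below (range w)" using wpos by (intro bdd_belowI[of _ 0]) (auto intro: less_imp_le)
  have mw: "m \<le> w t" for t unfolding m_def by (rule cInf_lower) (use bdd in auto)
  have m0: "0 \<le> m" unfolding m_def by (rule cInf_greatest) (auto intro: less_imp_le wpos)
  have mG: "m * F t \<le> G t" for t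
    using mw[of t] Fpos[of t] by (simp add: w_def pos_le_divide_eq)
  have gr1: "exp m * F t \<le> F (t + 1)" for t
    using gronwall[of F G m, OF step mG m0 F0, of 1 t] by simp
  have wlow: "exp m / rho \<le> w t" for t
  proof -
    have "exp m * F t \<le> rho * G t" using gr1[of t] robF[of t] by linarith
    thus ?thesis using Fpos[of t] rho0 by (simp add: w_def field_simps)
  qed
  have "exp m / rho \<le> Inf (range w)" by (rule cInf_greatest) (use wlow in auto)
  hence mlow: "exp m / rho \<le> m" by (simp add: m_def)
  have ms: "s \<le> m"
  proof (rule ccontr)
    assume "\<not> s \<le> m"
    hence lt: "m < s" by simp
    have "exp (m - s) > 1 + (m - s)"
      using lt strict_exp[of "m - s"] by simp
    moreover have "exp m / rho = s * exp (m - s)"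
      using assms(1) by (simp add: rho_def exp_diff)
    ultimately have "s * (1 + (m - s)) < s * exp (m - s)"
      using assms(1) by (simp add: mult_strict_left_mono)
    hence "m > s * (1 + (m - s))" using mlow \<open>exp m / rho = s * exp (m - s)\<close> by linarith
    hence "(m - s) * (1 - s) > 0" by (simp add: algebra_simps)
    moreover have "(m - s) * (1 - s) \<le> 0" using lt assms(2) by (intro mult_nonpos_nonneg) auto
    ultimately show False by linarith
  qed
  have sG: "s * F t \<le> G t" for t
  proof -
    have "s * F t \<le> m * F t" using ms F0[of t] by (rule mult_right_mono)
    thus ?thesis using mG[of t] by linarith
  qed
  have main: "s * chi * exp (s * (x - 1)) \<le> G x" if "0 \<le> x" for x
  proof -
    have "exp (s * x) * F 1 \<le> F (1 + x)"
      using gronwall[of F G s, OF step sG _ F0 that, of 1] assms(1) by simp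
    also have "\<dots> \<le> rho * G x" using robF[of x] by (simp add: add.commute)
    finally have "exp (s * x) * chi \<le> rho * G x" using t1 by (simp add: F_def)
    hence "exp (s * x) * chi / rho \<le> G x" using rho0 by (simp add: field_simps)
    moreover have "exp (s * x) * chi / rho = s * chi * exp (s * (x - 1))"
    proof -
      have "exp (s * (x - 1)) = exp (s * x) / exp s" by (simp add: right_diff_distrib exp_diff)
      thus ?thesis by (simp add: rho_def)
    qed
    ultimately show ?thesis by simp
  qed
  show ?thesis
  proof
    fix x :: real assume x: "x \<in> {0<..1}"
    have "\<phi> x = G x" using ind x by (simp add: induced_by_def)
    thus "\<phi> x \<ge> max 1 (s * chi * exp (s * (x - 1)))"
      using main[of x] x assms(3) by (metis greaterThanAtMost_iff max.bounded_iff less_imp_le)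
  qed
qed

end
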